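(* Let $(X,\to)$ be a transition system over $A$. For every preorder $R\in\mathit{Pre}(X)$ and $x_1,x_2\in X$: $(x_1,x_2)\in\beta_s(R)$ iff for all $a\in A$ and all $y_1\in\delta_a(x_1)$ there exists $y_2\in\delta_a(x_2)$ with $y_1\mathrel Ry_2$. Moreover, if the transition system is finitely branching, $\beta_s$ is continuous on $(\mathit{Pre}(X),\supseteq)$.
   Context: A transition system over $A$: $(X,\to)$ with $\to\subseteq X\times A\times X$; $\delta_a(x)=\{x'\mid x\xrightarrow{a}x'\}$; finitely branching means $\{(a,x')\mid x\xrightarrow{a}x'\}$ is finite for all $x$. $\mathit{Pre}(X)$ is the set of preorders on $X$, ordered by $\supseteq$; continuity means preserving suprema of well-ordered chains in this order (i.e. intersections of descending chains). $\Diamond_a(S)=\{x\mid\exists x'\in S\colon x\xrightarrow{a}x'\}$. $\alpha_s(\mathcal S)=\{(x_1,x_2)\mid\forall S\in\mathcal S\colon(x_1\in S\Rightarrow x_2\in S)\}$ for $\mathcal S\subseteq\mathcal P(X)$; $\gamma_s(R)=\{S\subseteq X\mid\forall s\in S\colon R[\{s\}]\subseteq S\}$ where $R[\{s\}]=\{y\mid (s,y)\in R\}$; $\mathit{lo}_s(\mathcal S)=\bigcup_{a\in A}\{\Diamond_a(S)\mid S\in\mathrm{cl}^\cap_f(\mathcal S)\}$, with $\mathrm{cl}^\cap_f$ the closure under finite intersections (including the empty intersection $X$); $\beta_s=\alpha_s\circ\mathit{lo}_s\circ\gamma_s$. *)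

theory Defs
  imports Main
begin

(* A transition system over actions 'a with states 'x (X = UNIV :: 'x set),
   given by its transition relation T, where (x, a, x') \<in> T means x -a-> x'. *)

definition delta :: "('x \<times> 'a \<times> 'x) set \<Rightarrow> 'a \<Rightarrow> 'x \<Rightarrow> 'x set" where
  "delta T a x = {x'. (x, a, x') \<in> T}"

definition finitely_branching :: "('x \<times> 'a \<times> 'x) set \<Rightarrow> bool" where
  "finitely_branching T \<longleftrightarrow> (\<forall>x. finite {(a, x'). (x, a, x') \<in> T})"

definition Pre :: "('x \<times> 'x) set set" where
  "Pre = {R. preorder_on UNIV R}"

definition Dia :: "('x \<times> 'a \<times> 'x) set \<Rightarrow> 'a \<Rightarrow> 'x set \<Rightarrow> 'x set" where
  "Dia T a S = {x. \<exists>x'\<in>S. (x, a, x') \<in> T}"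

definition alpha_s :: "'x set set \<Rightarrow> ('x \<times> 'x) set" where
  "alpha_s SS = {(x1, x2). \<forall>S\<in>SS. x1 \<in> S \<longrightarrow> x2 \<in> S}"

definition gamma_s :: "('x \<times> 'x) set \<Rightarrow> 'x set set" where
  "gamma_s R = {S. \<forall>s\<in>S. R `` {s} \<subseteq> S}"

(* closure under finite intersections, including the empty intersection X = UNIV *)
definition cl_fin_inter :: "'x set set \<Rightarrow> 'x set set" where
  "cl_fin_inter SS = {\<Inter> F | F. finite F \<and> F \<subseteq> SS}"

definition lo_s :: "('x \<times> 'a \<times> 'x) set \<Rightarrow> 'x set set \<Rightarrow> 'x set set" where
  "lo_s T SS = (\<Union>a. {Dia T a S | S. S \<in> cl_fin_inter SS})"

definition beta_s :: "('x \<times> 'a \<times> 'x) set \<Rightarrow> ('x \<times> 'x) set \<Rightarrow> ('x \<times> 'x) set" where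
  "beta_s T R = alpha_s (lo_s T (gamma_s R))"

(* A well-ordered chain in (Pre(X), \<supseteq>): a set of preorders totally ordered by
   inclusion in which every nonempty subset has a least element w.r.t. \<supseteq>,
   i.e. a \<subseteq>-greatest element. *)
definition wo_chain_sup :: "('x \<times> 'x) set set \<Rightarrow> bool" where
  "wo_chain_sup C \<longleftrightarrow> C \<subseteq> Pre \<and> (\<forall>R1\<in>C. \<forall>R2\<in>C. R1 \<subseteq> R2 \<or> R2 \<subseteq> R1) \<and>
     (\<forall>D. D \<subseteq> C \<and> D \<noteq> {} \<longrightarrow> (\<exists>R\<in>D. \<forall>R'\<in>D. R' \<subseteq> R))"

(* continuity on (Pre(X), \<supseteq>): preserves suprema (= intersections) of nonempty
   well-ordered chains *)
definition continuous_Pre :: "(('x \<times> 'x) set \<Rightarrow> ('x \<times> 'x) set) \<Rightarrow> bool" where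
  "continuous_Pre f \<longleftrightarrow> (\<forall>C. C \<noteq> {} \<and> wo_chain_sup C \<longrightarrow> f (\<Inter> C) = (\<Inter>R\<in>C. f R))"

end

theory Submission
  imports Defs
begin

lemma pre_props:
  assumes "R \<in> Pre"
  shows "\<And>x. (x,x) \<in> R" and "trans R"
  using assms unfolding Pre_def preorder_on_def refl_on_def by auto

lemma gamma_inter:
  assumes "F \<subseteq> gamma_s R"
  shows "\<Inter>F \<in> gamma_s R"
  using assms unfolding gamma_s_def by blast

lemma cl_gamma: "cl_fin_inter (gamma_s R) = gamma_s R"
proof
  show "cl_fin_inter (gamma_s R) \<subseteq> gamma_s R"
    unfolding cl_fin_inter_def using gamma_inter by blast
next
  show "gamma_s R \<subseteq> cl_fin_inter (gamma_s R)"
  proof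
    fix S assume "S \<in> gamma_s R"
    then have "S = \<Inter>{S} \<and> finite {S} \<and> {S} \<subseteq> gamma_s R" by auto
    then show "S \<in> cl_fin_inter (gamma_s R)" unfolding cl_fin_inter_def by blast
  qed
qed

lemma beta_char:
  assumes "R \<in> Pre"
  shows "(x1, x2) \<in> beta_s T R \<longleftrightarrow>
            (\<forall>a. \<forall>y1\<in>delta T a x1. \<exists>y2\<in>delta T a x2. (y1, y2) \<in> R)"
proof -
  have mem: "(x1, x2) \<in> beta_s T R \<longleftrightarrow>
     (\<forall>a S. S \<in> gamma_s R \<longrightarrow> x1 \<in> Dia T a S \<longrightarrow> x2 \<in> Dia T a S)"
    unfolding beta_s_def alpha_s_def lo_s_def cl_gamma by blast
  show ?thesis
  proof
    assume h: "(x1, x2) \<in> beta_s T R"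
    show "\<forall>a. \<forall>y1\<in>delta T a x1. \<exists>y2\<in>delta T a x2. (y1, y2) \<in> R"
    proof (intro allI ballI)
      fix a y1 assume y1: "y1 \<in> delta T a x1"
      have g: "R `` {y1} \<in> gamma_s R"
        using pre_props(2)[OF assms] unfolding gamma_s_def trans_def by blast
      have "x1 \<in> Dia T a (R `` {y1})"
        using y1 pre_props(1)[OF assms] unfolding Dia_def delta_def by blast
      then have "x2 \<in> Dia T a (R `` {y1})" using h mem g by blast
      then show "\<exists>y2\<in>delta T a x2. (y1, y2) \<in> R"
        unfolding Dia_def delta_def by blast
    qed
  next
    assume h: "\<forall>a. \<forall>y1\<in>delta T a x1. \<exists>y2\<in>delta T a x2. (y1, y2) \<in> R"
    show "(x1, x2) \<in> beta_s T R"
      unfolding mem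
    proof (intro allI impI)
      fix a S assume S: "S \<in> gamma_s R" and x1: "x1 \<in> Dia T a S"
      then obtain y1 where "y1 \<in> S" "y1 \<in> delta T a x1"
        unfolding Dia_def delta_def by blast
      then obtain y2 where "y2 \<in> delta T a x2" "(y1, y2) \<in> R" using h by blast
      then have "y2 \<in> S" using S \<open>y1 \<in> S\<close> unfolding gamma_s_def by blast
      then show "x2 \<in> Dia T a S" using \<open>y2 \<in> delta T a x2\<close>
        unfolding Dia_def delta_def by blast
    qed
  qed
qed

lemma chain_finite:
  assumes "finite F" "C \<noteq> {}"
    and chain: "\<forall>R1\<in>C. \<forall>R2\<in>C. R1 \<subseteq> R2 \<or> R2 \<subseteq> R1"
  shows "(\<forall>R\<in>C. \<exists>y\<in>F. (y1, y) \<in> R) \<Longrightarrow> \<exists>y\<in>F. \<forall>R\<in>C. (y1, y) \<in> R"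
  using assms(1)
proof (induction F rule: finite_induct)
  case empty
  then show ?case using assms(2) by auto
next
  case (insert y F)
  show ?case
  proof (cases "\<forall>R\<in>C. (y1, y) \<in> R")
    case True then show ?thesis by blast
  next
    case False
    then obtain R0 where R0: "R0 \<in> C" "(y1, y) \<notin> R0" by blast
    have "\<forall>R\<in>C. \<exists>y\<in>F. (y1, y) \<in> R"
    proof
      fix R assume R: "R \<in> C"
      show "\<exists>y\<in>F. (y1, y) \<in> R"
      proof (cases "R \<subseteq> R0")
        case True
        then have "(y1, y) \<notin> R" using R0 by blast
        then show ?thesis using insert.prems R by blast
      next
        case False
        then have "R0 \<subseteq> R" using chain R R0 by blast
        obtain y' where "y' \<in> F" "(y1, y') \<in> R0" using insert.prems R0 by blast
        then show ?thesis using \<open>R0 \<subseteq> R\<close> by blast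
      qed
    qed
    then show ?thesis using insert.IH by blast
  qed
qed

theorem mainTheorem7:
  fixes T :: "('x \<times> 'a \<times> 'x) set"
  shows "(\<forall>R\<in>Pre. \<forall>x1 x2. (x1, x2) \<in> beta_s T R \<longleftrightarrow>
            (\<forall>a. \<forall>y1\<in>delta T a x1. \<exists>y2\<in>delta T a x2. (y1, y2) \<in> R))
         \<and> (finitely_branching T \<longrightarrow> continuous_Pre (beta_s T))"
proof (intro conjI impI)
  show "\<forall>R\<in>Pre. \<forall>x1 x2. (x1, x2) \<in> beta_s T R \<longleftrightarrow>
            (\<forall>a. \<forall>y1\<in>delta T a x1. \<exists>y2\<in>delta T a x2. (y1, y2) \<in> R)"
    by (simp add: beta_char)
next
  assume fb: "finitely_branching T"
  have fin: "finite (delta T a x)" for a x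
  proof -
    have "delta T a x \<subseteq> snd ` {(a, x'). (x, a, x') \<in> T}"
      unfolding delta_def by force
    moreover have "finite {(a, x'). (x, a, x') \<in> T}"
      using fb unfolding finitely_branching_def by simp
    ultimately show ?thesis
      by (meson finite_imageI finite_subset)
  qed
  show "continuous_Pre (beta_s T)"
    unfolding continuous_Pre_def
  proof (intro allI impI)
    fix C :: "('x \<times> 'x) set set"
    assume h: "C \<noteq> {} \<and> wo_chain_sup C"
    then have CP: "C \<subseteq> Pre" and chain: "\<forall>R1\<in>C. \<forall>R2\<in>C. R1 \<subseteq> R2 \<or> R2 \<subseteq> R1"
      and ne: "C \<noteq> {}"
      unfolding wo_chain_sup_def by auto
    have IP: "\<Inter>C \<in> Pre"
    proof -
      have "(x, x) \<in> \<Inter>C" for x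
      proof (rule InterI)
        fix R assume "R \<in> C"
        then have "R \<in> Pre" using CP by (simp add: subset_eq)
        then show "(x, x) \<in> R" by (rule pre_props(1))
      qed
      moreover have "trans (\<Inter>C)"
      proof (rule transI)
        fix x y z assume xy: "(x, y) \<in> \<Inter>C" and yz: "(y, z) \<in> \<Inter>C"
        show "(x, z) \<in> \<Inter>C"
        proof (rule InterI)
          fix R assume R: "R \<in> C"
          then have "R \<in> Pre" using CP by (simp add: subset_eq)
          then have tR: "trans R" by (rule pre_props(2))
          have "(x, y) \<in> R" using xy R by (rule InterD)
          moreover have "(y, z) \<in> R" using yz R by (rule InterD)
          ultimately show "(x, z) \<in> R" using tR by (rule transD[rotated])
        qed
      qed
      ultimately show ?thesis unfolding Pre_def preorder_on_def refl_on_def by auto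
    qed
    show "beta_s T (\<Inter>C) = (\<Inter>R\<in>C. beta_s T R)"
    proof (intro set_eqI iffI)
      fix p assume pin: "p \<in> beta_s T (\<Inter>C)"
      obtain x1 x2 where p: "p = (x1, x2)" by (metis surj_pair)
      have H: "\<forall>a. \<forall>y1\<in>delta T a x1. \<exists>y2\<in>delta T a x2. (y1, y2) \<in> \<Inter>C"
      proof -
        have "(x1, x2) \<in> beta_s T (\<Inter>C)" using pin p by simp
        then show ?thesis by (rule iffD1[OF beta_char[OF IP]])
      qed
      show "p \<in> (\<Inter>R\<in>C. beta_s T R)"
      proof
        fix R assume R: "R \<in> C"
        have "\<forall>a. \<forall>y1\<in>delta T a x1. \<exists>y2\<in>delta T a x2. (y1, y2) \<in> R"
          using H R by blast
        moreover have RP: "R \<in> Pre" using R CP by (simp add: subset_eq)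
        ultimately have "(x1, x2) \<in> beta_s T R" using iffD2[OF beta_char[OF RP]] by blast
        then show "p \<in> beta_s T R" using p by simp
      qed
    next
      fix p assume pin: "p \<in> (\<Inter>R\<in>C. beta_s T R)"
      obtain x1 x2 where p: "p = (x1, x2)" by (metis surj_pair)
      have H: "\<forall>a. \<forall>y1\<in>delta T a x1. \<exists>y2\<in>delta T a x2. (y1, y2) \<in> R" if R: "R \<in> C" for R
      proof -
        have "(x1, x2) \<in> beta_s T R" using pin p R by auto
        moreover have RP: "R \<in> Pre" using R CP by (simp add: subset_eq)
        ultimately show ?thesis using iffD1[OF beta_char[OF RP]] by blast
      qed
      have "\<forall>a. \<forall>y1\<in>delta T a x1. \<exists>y2\<in>delta T a x2. (y1, y2) \<in> \<Inter>C"
      proof (intro allI ballI)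
        fix a y1 assume y1: "y1 \<in> delta T a x1"
        have "\<forall>R\<in>C. \<exists>y\<in>delta T a x2. (y1, y) \<in> R"
          using H y1 by blast
        then have "\<exists>y\<in>delta T a x2. \<forall>R\<in>C. (y1, y) \<in> R"
          using chain_finite[OF fin ne chain] by blast
        then show "\<exists>y2\<in>delta T a x2. (y1, y2) \<in> \<Inter>C" by blast
      qed
      then have "(x1, x2) \<in> beta_s T (\<Inter>C)" by (rule iffD2[OF beta_char[OF IP]])
      then show "p \<in> beta_s T (\<Inter>C)" using p by simp
    qed
  qed
qed

end
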